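(* Let $q$ be a prime power and let $4\le h\le k$ be integers. Let $s\ge 0$ and $r\ge 1$ be integers, let $i_1,\ldots,i_s$ be distinct indices in $\{1,\ldots,h\}$ and $j_1,\ldots,j_r$ distinct indices in $\{h+1,\ldots,k\}$, and let $a_{i_1},\ldots,a_{i_s},b_{j_1},\ldots,b_{j_r}\in\mathbb{F}_q^*$. Let $\Lambda$ be the number of $(x_1,\ldots,x_k)\in\mathbb{F}_q^k$ satisfying $$a_{i_1}x_{i_1}+\cdots+a_{i_s}x_{i_s}+b_{j_1}x_{j_1}+\cdots+b_{j_r}x_{j_r}=0\quad\text{and}\quad (x_1+\cdots+x_h)\,x_1x_2\cdots x_h=0.$$ Then $$\Lambda=q^{k-1}-q^{k-h-1}(q-1)^h+\psi_{h}q^{k-h-1}=q^{k-h-1}\bigl(q^h+\psi_{h}-(q-1)^h\bigr).$$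
   Context: For an integer $m\ge 0$, $\psi_m$ denotes the number of $(x_1,\ldots,x_m)\in\mathbb{F}_q^m$ with $\sum_{i=1}^m x_i=0$ and $x_i\neq 0$ for all $i$ (so $\psi_0=1$). *)

theory Defs
  imports Main "HOL-Library.FuncSet" "HOL-Library.Cardinality"
begin

definition psi :: "'a::{finite,field} itself \<Rightarrow> nat \<Rightarrow> nat" where
  "psi _ m = card {x \<in> {1..m} \<rightarrow>\<^sub>E (UNIV::'a set).
                    (\<Sum>i\<in>{1..m}. x i) = 0 \<and> (\<forall>i\<in>{1..m}. x i \<noteq> 0)}"

end

theory Submission
  imports Defs
begin

lemma cardA:
  fixes h :: nat
  shows "int (card {y \<in> {1..h} \<rightarrow>\<^sub>E (UNIV::'a::{finite,field} set).
              (\<Sum>i\<in>{1..h}. y i) * (\<Prod>i\<in>{1..h}. y i) = 0})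
        = int CARD('a) ^ h - (int CARD('a) - 1) ^ h + int (psi TYPE('a) h)"
proof -
  define U where "U = ({1..h} \<rightarrow>\<^sub>E (UNIV::'a set))"
  define A where "A = {y \<in> U. (\<Sum>i\<in>{1..h}. y i) * (\<Prod>i\<in>{1..h}. y i) = 0}"
  define P where "P = ({1..h} \<rightarrow>\<^sub>E (UNIV - {0::'a}))"
  define Ps where "Ps = {x \<in> {1..h} \<rightarrow>\<^sub>E (UNIV::'a set).
                    (\<Sum>i\<in>{1..h}. x i) = 0 \<and> (\<forall>i\<in>{1..h}. x i \<noteq> 0)}"
  define N where "N = U - A"
  have fU: "finite U" unfolding U_def by (simp add: finite_PiE)
  have cU: "card U = CARD('a) ^ h" unfolding U_def by (simp add: card_PiE)
  have cP: "card P = (CARD('a) - 1) ^ h" unfolding P_def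
    by (simp add: card_PiE card_Diff_subset)
  have q1: "CARD('a) \<ge> 1" by (simp add: Suc_leI)
  have NP: "N = P - Ps"
    unfolding N_def U_def A_def P_def Ps_def by (auto simp: PiE_iff)
  have PsP: "Ps \<subseteq> P" unfolding P_def Ps_def PiE_def by auto
  have fP: "finite P" unfolding P_def by (simp add: finite_PiE)
  have cN: "card N = card P - card Ps" unfolding NP using PsP fP
    by (simp add: card_Diff_subset finite_subset)
  have cPs: "card Ps \<le> card P" using PsP fP by (simp add: card_mono)
  have AU: "A \<subseteq> U" unfolding A_def by auto
  have cA: "card A = card U - card N" unfolding N_def using AU fU
    by (metis card_Diff_subset card_mono diff_diff_cancel finite_subset)
  have NU: "card N \<le> card U" unfolding N_def using fU by (simp add: card_mono)
  have psi: "psi TYPE('a) h = card Ps" unfolding psi_def Ps_def by simp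
  have "int (card A) = int (card U) - int (card P) + int (card Ps)"
    using cA cN NU cPs by simp
  also have "\<dots> = int CARD('a) ^ h - (int CARD('a) - 1) ^ h + int (psi TYPE('a) h)"
    using cU cP q1 psi by (simp add: of_nat_diff)
  finally show ?thesis unfolding A_def U_def .
qed


lemma lin_solve:
  fixes A B c x :: "'a::field"
  assumes "c \<noteq> 0"
  shows "(A + (c * x + B) = 0) = (x = - (A + B) / c)"
proof -
  have "(x = - (A + B) / c) = (x * c = - (A + B))" using assms by (simp add: eq_divide_eq)
  also have "\<dots> = (A + (c * x + B) = 0)"
    by (metis add.commute add.left_commute mult.commute neg_eq_iff_add_eq_0)
  finally show ?thesis by simp
qed

lemma count_main:
  fixes h k :: nat and I J :: "nat set" and a b :: "nat \<Rightarrow> 'a::{finite,field}"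
  assumes "I \<subseteq> {1..h}" and "J \<subseteq> {h+1..k}" and "j0 \<in> J"
    and "\<forall>j\<in>J. b j \<noteq> 0"
  shows "card {x \<in> {1..k} \<rightarrow>\<^sub>E (UNIV::'a set).
              (\<Sum>i\<in>I. a i * x i) + (\<Sum>j\<in>J. b j * x j) = 0 \<and>
              (\<Sum>i\<in>{1..h}. x i) * (\<Prod>i\<in>{1..h}. x i) = 0}
         = card {y \<in> {1..h} \<rightarrow>\<^sub>E (UNIV::'a set).
              (\<Sum>i\<in>{1..h}. y i) * (\<Prod>i\<in>{1..h}. y i) = 0} * CARD('a) ^ (k - h - 1)"
proof -
  define S where "S = {x \<in> {1..k} \<rightarrow>\<^sub>E (UNIV::'a set).
              (\<Sum>i\<in>I. a i * x i) + (\<Sum>j\<in>J. b j * x j) = 0 \<and>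
              (\<Sum>i\<in>{1..h}. x i) * (\<Prod>i\<in>{1..h}. x i) = 0}"
  define A where "A = {y \<in> {1..h} \<rightarrow>\<^sub>E (UNIV::'a set).
              (\<Sum>i\<in>{1..h}. y i) * (\<Prod>i\<in>{1..h}. y i) = 0}"
  define D where "D = {h+1..k} - {j0}"
  define B where "B = (D \<rightarrow>\<^sub>E (UNIV::'a set))"
  define v where "v = (\<lambda>(y::nat \<Rightarrow> 'a) (z::nat \<Rightarrow> 'a).
      - ((\<Sum>i\<in>I. a i * y i) + (\<Sum>j\<in>J - {j0}. b j * z j)) / b j0)"
  define f where "f = (\<lambda>x::nat \<Rightarrow> 'a. (restrict x {1..h}, restrict x D))"
  define g where "g = (\<lambda>(y, z). (\<lambda>i::nat. if i \<in> {1..h} then y i else if i \<in> D then z i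
                     else if i = j0 then v y z else undefined))"
  have j0: "j0 \<in> {h+1..k}" using assms by auto
  have bj0: "b j0 \<noteq> 0" using assms by auto
  have fJ: "finite J" using assms(2) finite_subset by blast
  have JD: "J - {j0} \<subseteq> D" using assms(2) unfolding D_def by auto
  have k1: "{1..k} = {1..h} \<union> D \<union> {j0}" using j0 unfolding D_def by auto
  have dis: "{1..h} \<inter> D = {}" "j0 \<notin> D" "j0 \<notin> {1..h}" using j0 unfolding D_def by auto
  have sumJ: "(\<Sum>j\<in>J. b j * x j) = b j0 * x j0 + (\<Sum>j\<in>J - {j0}. b j * x j)" for x :: "nat \<Rightarrow> 'a"
    using fJ assms(3) by (simp add: sum.remove)
  have eqv: "((\<Sum>i\<in>I. a i * x i) + (\<Sum>j\<in>J. b j * x j) = 0) \<longleftrightarrow>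
        x j0 = v (restrict x {1..h}) (restrict x D)" for x :: "nat \<Rightarrow> 'a"
  proof -
    have 1: "(\<Sum>i\<in>I. a i * restrict x {1..h} i) = (\<Sum>i\<in>I. a i * x i)"
      using assms(1) by (intro sum.cong) auto
    have 2: "(\<Sum>j\<in>J - {j0}. b j * restrict x D j) = (\<Sum>j\<in>J - {j0}. b j * x j)"
      using JD by (intro sum.cong) auto
    show ?thesis unfolding v_def 1 2 sumJ using lin_solve[OF bj0] by simp
  qed
  have rylem: "restrict (g (y, z)) {1..h} = y" if y: "y \<in> {1..h} \<rightarrow>\<^sub>E UNIV" for y z
  proof
    fix i show "restrict (g (y, z)) {1..h} i = y i"
      using y unfolding g_def by (cases "i \<in> {1..h}") (auto simp: PiE_iff extensional_def)
  qed
  have rzlem: "restrict (g (y, z)) D = z" if z: "z \<in> D \<rightarrow>\<^sub>E UNIV" for y z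
  proof
    fix i show "restrict (g (y, z)) D i = z i"
    proof (cases "i \<in> D")
      case True
      hence "i \<notin> {1..h}" using dis by auto
      thus ?thesis using True unfolding g_def by auto
    next
      case False
      thus ?thesis using z by (auto simp: PiE_iff extensional_def)
    qed
  qed
  have bij: "bij_betw f S (A \<times> B)"
  proof (rule bij_betw_byWitness[where f' = g])
    show "\<forall>x\<in>S. g (f x) = x"
    proof
      fix x assume x: "x \<in> S"
      hence xe: "x \<in> {1..k} \<rightarrow>\<^sub>E UNIV" and xv: "x j0 = v (restrict x {1..h}) (restrict x D)"
        unfolding S_def using eqv by auto
      show "g (f x) = x"
      proof
        fix i
        show "g (f x) i = x i"
          using xe xv dis k1 unfolding f_def g_def
          by (cases "i \<in> {1..k}") (auto simp: PiE_iff extensional_def)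
      qed
    qed
    show "\<forall>p\<in>A \<times> B. f (g p) = p"
    proof
      fix p assume p: "p \<in> A \<times> B"
      obtain y z where pyz: "p = (y, z)" by (cases p)
      have y: "y \<in> {1..h} \<rightarrow>\<^sub>E UNIV" and z: "z \<in> D \<rightarrow>\<^sub>E UNIV"
        using p pyz unfolding A_def B_def by auto
      have "restrict (g (y, z)) {1..h} = y" using rylem[OF y] .
      moreover have "restrict (g (y, z)) D = z" using rzlem[OF z] .
      ultimately show "f (g p) = p" unfolding f_def pyz by simp
    qed
    have condr: "(\<Sum>i\<in>{1..h}. restrict x {1..h} i) * (\<Prod>i\<in>{1..h}. restrict x {1..h} i)
        = (\<Sum>i\<in>{1..h}. x i) * (\<Prod>i\<in>{1..h}. x i)" for x :: "nat \<Rightarrow> 'a"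
      by simp
    show "f ` S \<subseteq> A \<times> B"
    proof
      fix p assume "p \<in> f ` S"
      then obtain x where x: "x \<in> S" and p: "p = f x" by auto
      have "restrict x {1..h} \<in> A" using x condr unfolding A_def S_def by auto
      moreover have "restrict x D \<in> B" unfolding B_def by auto
      ultimately show "p \<in> A \<times> B" unfolding p f_def by simp
    qed
    show "g ` (A \<times> B) \<subseteq> S"
    proof
      fix x assume "x \<in> g ` (A \<times> B)"
      then obtain y z where yz: "y \<in> A" "z \<in> B" and x: "x = g (y, z)" by auto
      have y: "y \<in> {1..h} \<rightarrow>\<^sub>E UNIV" and z: "z \<in> D \<rightarrow>\<^sub>E UNIV"
        and cy: "(\<Sum>i\<in>{1..h}. y i) * (\<Prod>i\<in>{1..h}. y i) = 0"
        using yz unfolding A_def B_def by auto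
      have ry: "restrict x {1..h} = y" unfolding x using rylem[OF y] .
      have rz: "restrict x D = z" unfolding x using rzlem[OF z] .
      have xj0: "x j0 = v y z" using dis unfolding x g_def by auto
      have xe: "x \<in> {1..k} \<rightarrow>\<^sub>E UNIV"
        using k1 unfolding x g_def by (auto simp: PiE_iff extensional_def)
      have e: "(\<Sum>i\<in>I. a i * x i) + (\<Sum>j\<in>J. b j * x j) = 0"
        using eqv[of x] xj0 ry rz by simp
      have xy: "\<And>i. i \<in> {1..h} \<Longrightarrow> x i = y i" using ry by (metis restrict_apply')
      have s1: "(\<Sum>i\<in>{1..h}. x i) = (\<Sum>i\<in>{1..h}. y i)" by (rule sum.cong) (simp_all add: xy)
      have s2: "(\<Prod>i\<in>{1..h}. x i) = (\<Prod>i\<in>{1..h}. y i)" by (rule prod.cong) (simp_all add: xy)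
      have c: "(\<Sum>i\<in>{1..h}. x i) * (\<Prod>i\<in>{1..h}. x i) = 0"
        using cy unfolding s1 s2 .
      show "x \<in> S" unfolding S_def using xe e c by auto
    qed
  qed
  have "card S = card (A \<times> B)" using bij by (rule bij_betw_same_card)
  also have "\<dots> = card A * card B" by (rule card_cartesian_product)
  also have "card B = CARD('a) ^ card D" unfolding B_def D_def by (simp add: card_PiE)
  also have "card D = k - h - 1" unfolding D_def using j0 by (simp add: card_Diff_singleton)
  finally show ?thesis unfolding S_def A_def .
qed

theorem proposition2p1:
  fixes h k :: nat and I J :: "nat set" and a b :: "nat \<Rightarrow> 'a::{finite,field}"
  assumes "4 \<le> h" and "h \<le> k"
    and "I \<subseteq> {1..h}" and "J \<subseteq> {h+1..k}" and "J \<noteq> {}"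
    and "\<forall>i\<in>I. a i \<noteq> 0" and "\<forall>j\<in>J. b j \<noteq> 0"
  shows "int (card {x \<in> {1..k} \<rightarrow>\<^sub>E (UNIV::'a set).
              (\<Sum>i\<in>I. a i * x i) + (\<Sum>j\<in>J. b j * x j) = 0 \<and>
              (\<Sum>i\<in>{1..h}. x i) * (\<Prod>i\<in>{1..h}. x i) = 0})
         = int (CARD('a)) ^ (k - 1) - int (CARD('a)) ^ (k - h - 1) * (int (CARD('a)) - 1) ^ h
           + int (psi TYPE('a) h) * int (CARD('a)) ^ (k - h - 1)
       \<and> int (CARD('a)) ^ (k - 1) - int (CARD('a)) ^ (k - h - 1) * (int (CARD('a)) - 1) ^ h
           + int (psi TYPE('a) h) * int (CARD('a)) ^ (k - h - 1)
         = int (CARD('a)) ^ (k - h - 1) *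
           (int (CARD('a)) ^ h + int (psi TYPE('a) h) - (int (CARD('a)) - 1) ^ h)"
proof -
  obtain j0 where j0: "j0 \<in> J" using assms(5) by auto
  hence hk: "h + 1 \<le> k" using assms(4) by auto
  have km: "k - 1 = (k - h - 1) + h" using hk by simp
  define q where "q = int CARD('a)"
  have "int (card {x \<in> {1..k} \<rightarrow>\<^sub>E (UNIV::'a set).
              (\<Sum>i\<in>I. a i * x i) + (\<Sum>j\<in>J. b j * x j) = 0 \<and>
              (\<Sum>i\<in>{1..h}. x i) * (\<Prod>i\<in>{1..h}. x i) = 0})
        = (q ^ h - (q - 1) ^ h + int (psi TYPE('a) h)) * q ^ (k - h - 1)"
    unfolding count_main[OF assms(3,4) j0 assms(7)] q_def using cardA[where 'a='a, of h]
    by simp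
  moreover have "q ^ (k - 1) = q ^ (k - h - 1) * q ^ h" unfolding km by (simp add: power_add)
  ultimately show ?thesis unfolding q_def[symmetric] by (simp add: algebra_simps)
qed

end
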